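(* Let $f:\mathcal X^n\to\mathcal T$ with $\mathcal T$ finite, $\varepsilon>0$, and let $M$ be $L_{0,1}$-unbiased and $\varepsilon$-differentially private, where $L_{0,1}(s,t)=\mathbf 1\{s\ne t\}$. Then for every $x\in\mathcal X^n$ and $t\in\mathcal T$, $$\mathbb P(M(x)=t)\ge e^{-2\,\mathrm{len}_f(x;t)\varepsilon}\,\mathbb P(M(x)=f(x)).$$
   Context: $d_H$ is the Hamming distance on $\mathcal X^n$; neighboring means $d_H\le1$. $M$ is $\varepsilon$-differentially private if $\mathbb P(M(x)\in S)\le e^\varepsilon\mathbb P(M(x')\in S)$ for all neighboring $x,x'$ and all $S$. $M$ is $L$-unbiased if $\mathbb E[L(M(x),f(x))]\le\mathbb E[L(M(x),t)]$ for all $x,t$; for $L_{0,1}$ this means $\mathbb P(M(x)=f(x))\ge\mathbb P(M(x)=t)$. The inverse sensitivity is $\mathrm{len}_f(x;t)=\inf\{d_H(x,x'):f(x')=t\}$ with $\inf\emptyset=+\infty$ and $e^{-\infty}=0$. *)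

theory Defs
  imports "HOL-Probability.Probability"
begin

text \<open>Datasets in X^n are lists of length n; Hamming distance counts differing positions.\<close>
definition hamming :: "'x list \<Rightarrow> 'x list \<Rightarrow> nat" where
  "hamming xs ys = card {i. i < length xs \<and> i < length ys \<and> xs ! i \<noteq> ys ! i}"

definition diff_private :: "nat \<Rightarrow> real \<Rightarrow> ('x list \<Rightarrow> 't pmf) \<Rightarrow> bool" where
  "diff_private n \<epsilon> M \<longleftrightarrow>
     (\<forall>x x' S. length x = n \<longrightarrow> length x' = n \<longrightarrow> hamming x x' \<le> 1 \<longrightarrow>
        measure_pmf.prob (M x) S \<le> exp \<epsilon> * measure_pmf.prob (M x') S)"

definition unbiased :: "nat \<Rightarrow> ('t \<Rightarrow> 't \<Rightarrow> real) \<Rightarrow> ('x list \<Rightarrow> 't) \<Rightarrow> ('x list \<Rightarrow> 't pmf) \<Rightarrow> bool" where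
  "unbiased n L f M \<longleftrightarrow>
     (\<forall>x t. length x = n \<longrightarrow>
        measure_pmf.expectation (M x) (\<lambda>s. L s (f x)) \<le> measure_pmf.expectation (M x) (\<lambda>s. L s t))"

definition L01 :: "'t \<Rightarrow> 't \<Rightarrow> real" where
  "L01 s t = (if s \<noteq> t then 1 else 0)"

text \<open>Inverse sensitivity; infimum of the empty set is \<infinity>.\<close>
definition inv_sens :: "nat \<Rightarrow> ('x list \<Rightarrow> 't) \<Rightarrow> 'x list \<Rightarrow> 't \<Rightarrow> enat" where
  "inv_sens n f x t = Inf {enat (hamming x x') | x'. length x' = n \<and> f x' = t}"

definition exp_neg :: "real \<Rightarrow> enat \<Rightarrow> real" where
  "exp_neg c k = (case k of enat m \<Rightarrow> exp (- c * real m) | \<infinity> \<Rightarrow> 0)"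

end

theory Submission
  imports Defs
begin

lemma exp_L01:
  "measure_pmf.expectation p (\<lambda>s. L01 s t) = 1 - pmf p t"
proof -
  have "(\<lambda>s. L01 s t) = indicator (space (measure_pmf p) - {t})"
    by (auto simp: L01_def fun_eq_iff indicator_def)
  hence "measure_pmf.expectation p (\<lambda>s. L01 s t) = measure_pmf.prob p (space (measure_pmf p) - {t})"
    by simp
  also have "\<dots> = 1 - measure_pmf.prob p {t}"
    by (rule measure_pmf.prob_compl) simp
  finally show ?thesis by (simp add: measure_pmf_single)
qed

lemma unb_le:
  assumes "unbiased n L01 f M" "length x = n"
  shows "pmf (M x) t \<le> pmf (M x) (f x)"
  using assms unfolding unbiased_def by (auto simp: exp_L01)

lemma hamming_path:
  fixes M :: "'x list \<Rightarrow> 't pmf"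
  assumes dp: "diff_private n \<epsilon> M"
  shows "\<And>x. length x = n \<Longrightarrow> length x' = n \<Longrightarrow> hamming x x' = k \<Longrightarrow>
      pmf (M x') s \<le> exp (real k * \<epsilon>) * pmf (M x) s"
proof (induction k)
  case 0
  have "{i. i < length x \<and> i < length x' \<and> x ! i \<noteq> x' ! i} = {}"
    using 0 unfolding hamming_def by (simp add: card_eq_0_iff)
  hence "x = x'" using 0 by (auto intro: nth_equalityI)
  thus ?case by simp
next
  case (Suc k)
  define D where "D = {i. i < length x \<and> i < length x' \<and> x ! i \<noteq> x' ! i}"
  have fin: "finite D" unfolding D_def by simp
  have cD: "card D = Suc k" using Suc.prems unfolding hamming_def D_def by simp
  then obtain i where iD: "i \<in> D" by (metis card.empty ex_in_conv nat.distinct(1))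
  define y where "y = x[i := x' ! i]"
  have ly: "length y = n" using Suc.prems by (simp add: y_def)
  have "{j. j < length y \<and> j < length x' \<and> y ! j \<noteq> x' ! j} = D - {i}"
    using iD Suc.prems unfolding D_def y_def by (auto simp: nth_list_update)
  hence "hamming y x' = k" using cD iD fin unfolding hamming_def by simp
  hence IH: "pmf (M x') s \<le> exp (real k * \<epsilon>) * pmf (M y) s"
    using Suc.IH ly Suc.prems by blast
  have "{j. j < length y \<and> j < length x \<and> y ! j \<noteq> x ! j} \<subseteq> {i}"
    
  proof
    fix j assume "j \<in> {j. j < length y \<and> j < length x \<and> y ! j \<noteq> x ! j}"
    thus "j \<in> {i}" unfolding y_def by (cases "j = i") auto
  qed
  hence "hamming y x \<le> 1" unfolding hamming_def
    using card_mono[of "{i}"] by fastforce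
  hence "pmf (M y) s \<le> exp \<epsilon> * pmf (M x) s"
  proof -
    have "measure_pmf.prob (M y) {s} \<le> exp \<epsilon> * measure_pmf.prob (M x) {s}"
      using dp ly Suc.prems \<open>hamming y x \<le> 1\<close> unfolding diff_private_def by blast
    thus ?thesis by (simp add: measure_pmf_single)
  qed
  hence "exp (real k * \<epsilon>) * pmf (M y) s \<le> exp (real k * \<epsilon>) * (exp \<epsilon> * pmf (M x) s)"
    by simp
  also have "\<dots> = exp (real (Suc k) * \<epsilon>) * pmf (M x) s"
    by (simp add: algebra_simps exp_add[symmetric])
  finally show ?case using IH by linarith
qed

theorem lemmaA1:
  fixes n :: nat and f :: "'x list \<Rightarrow> 't::finite" and M :: "'x list \<Rightarrow> 't pmf"
    and \<epsilon> :: real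
  assumes "\<epsilon> > 0"
    and "unbiased n L01 f M"
    and "diff_private n \<epsilon> M"
    and "length x = n"
  shows "pmf (M x) t \<ge> exp_neg (2 * \<epsilon>) (inv_sens n f x t) * pmf (M x) (f x)"
proof (cases "\<exists>x'. length x' = n \<and> f x' = t")
  case False
  hence "{enat (hamming x x') | x'. length x' = n \<and> f x' = t} = {}" by auto
  hence "inv_sens n f x t = \<infinity>" unfolding inv_sens_def by (simp only: Inf_empty top_enat_def)
  thus ?thesis by (simp add: exp_neg_def)
next
  case True
  define S where "S = {enat (hamming x x') | x'. length x' = n \<and> f x' = t}"
  have "S \<noteq> {}" using True unfolding S_def by blast
  hence "Inf S \<in> S" using wellorder_InfI by blast
  then obtain x' where x': "length x' = n" "f x' = t" and inv: "inv_sens n f x t = enat (hamming x x')"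
    unfolding S_def inv_sens_def by auto
  define k where "k = hamming x x'"
  have hs: "hamming x' x = k" unfolding k_def hamming_def by (rule arg_cong[where f=card]) auto
  have p1: "pmf (M x) (f x) \<le> exp (real k * \<epsilon>) * pmf (M x') (f x)"
    using hamming_path[OF assms(3) x'(1) assms(4) hs] .
  have p2: "pmf (M x') t \<le> exp (real k * \<epsilon>) * pmf (M x) t"
    using hamming_path[OF assms(3) assms(4) x'(1)] k_def by blast
  have u: "pmf (M x') (f x) \<le> pmf (M x') t"
    using unb_le[OF assms(2) x'(1)] x'(2) by simp
  have "pmf (M x) (f x) \<le> exp (real k * \<epsilon>) * (exp (real k * \<epsilon>) * pmf (M x) t)"
  proof -
    have a: "exp (real k * \<epsilon>) * pmf (M x') (f x) \<le> exp (real k * \<epsilon>) * pmf (M x') t"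
      using u by (rule mult_left_mono) simp
    have b: "exp (real k * \<epsilon>) * pmf (M x') t \<le> exp (real k * \<epsilon>) * (exp (real k * \<epsilon>) * pmf (M x) t)"
      using p2 by (rule mult_left_mono) simp
    show ?thesis using p1 a b by linarith
  qed
  hence "exp (- (2 * \<epsilon>) * real k) * pmf (M x) (f x) \<le>
     exp (- (2 * \<epsilon>) * real k) * (exp (real k * \<epsilon>) * (exp (real k * \<epsilon>) * pmf (M x) t))"
    by simp
  also have "\<dots> = (exp (- (2 * \<epsilon>) * real k) * exp (real k * \<epsilon>) * exp (real k * \<epsilon>)) * pmf (M x) t"
    by (simp only: mult.assoc)
  also have "exp (- (2 * \<epsilon>) * real k) * exp (real k * \<epsilon>) * exp (real k * \<epsilon>)
      = exp (- (2 * \<epsilon>) * real k + real k * \<epsilon> + real k * \<epsilon>)"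
    by (simp only: exp_add)
  also have "- (2 * \<epsilon>) * real k + real k * \<epsilon> + real k * \<epsilon> = 0"
    by (simp add: algebra_simps)
  also have "exp 0 * pmf (M x) t = pmf (M x) t" by simp
  finally show ?thesis using inv k_def by (simp add: exp_neg_def)
qed

end
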